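(* Let $(\Omega,\mathcal F,\mathcal P)$ be pre-Hahn-localizable with localization $\mathcal Q$. Then (1) $\mathcal F^{\mathcal P}=\mathcal F^{\mathcal Q}$, and (2) $(\Omega,\mathcal F^{\mathcal P},\mathcal P)$ (measures extended to $\mathcal F^{\mathcal P}$) is pre-Hahn-localizable. Moreover, if $(\Omega,\mathcal F,\mathcal P)$ is Hahn-localizable with a localization having pairwise disjoint supports, then $(\Omega,\mathcal F^{\mathcal P},\mathcal P)$ is Hahn-localizable.
   Context: $\mathcal P$ is a family of probability measures on $\mathcal F$. For a probability measure $P$, $\mathcal F^P=\{F\cup Z:F\in\mathcal F, Z\subseteq N \text{ for some } N\in\mathcal F,P(N)=0\}$, and for a family $\mathcal R$, $\mathcal F^{\mathcal R}=\bigcap_{R\in\mathcal R}\mathcal F^R$; each measure extends uniquely to its completion and hence to $\mathcal F^{\mathcal R}$. $\mathcal A\lll\mathcal B$ means every $A\in\mathcal A$ is absolutely continuous w.r.t. some $B\in\mathcal B$; $\mathrm{sconv}$ denotes countable convex combinations. $\mathcal P$ is pre-Hahn-localizable if there are a family $\mathcal Q$ of probability measures on $\mathcal F$ (localization) and sets $S_Q\in\mathcal F$ (supports) with $Q(S_R)=\delta_{QR}$ for $Q,R\in\mathcal Q$ and $\mathcal Q\lll\mathcal P\lll\mathrm{sconv}(\mathcal Q)$. It is Hahn-localizable if this holds with, in addition: for every family $E_Q\in\mathcal F$, $E_Q\subseteq S_Q$, there is $S\in\mathcal F$ with $Q(E_Q\setminus S)=0$ for all $Q$, and such that any $F\in\mathcal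 F$ with $Q(E_Q\setminus F)=0$ for all $Q$ satisfies $Q(S\setminus F)=0$ for all $Q$. *)

theory Defs
  imports "HOL-Probability.Probability"
begin

text \<open>The base measurable space (Omega, F) is represented by a measure M0 (only its space
  and sets are used). A family of probability measures on F is a set of measures.\<close>

definition prob_family :: "'a measure \<Rightarrow> 'a measure set \<Rightarrow> bool" where
  "prob_family M0 P \<longleftrightarrow>
     (\<forall>p\<in>P. prob_space p \<and> space p = space M0 \<and> sets p = sets M0)"

definition compl_sets :: "'a measure \<Rightarrow> 'a measure set \<Rightarrow> 'a set set" where
  "compl_sets M0 R = {A. A \<subseteq> space M0 \<and> (\<forall>r\<in>R. A \<in> sets (completion r))}"

definition compl_space :: "'a measure \<Rightarrow> 'a measure set \<Rightarrow> 'a measure" where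
  "compl_space M0 R = sigma (space M0) (compl_sets M0 R)"

definition ext_measure :: "'a measure \<Rightarrow> 'a measure set \<Rightarrow> 'a measure \<Rightarrow> 'a measure" where
  "ext_measure M0 R p = measure_of (space M0) (compl_sets M0 R) (emeasure (completion p))"

text \<open>A \<lll> B: every a in A is absolutely continuous w.r.t. some b in B.
  (Library: absolutely_continuous b a means null_sets b \<subseteq> null_sets a, i.e. a << b.)\<close>

definition lll :: "'a measure set \<Rightarrow> 'a measure set \<Rightarrow> bool" where
  "lll A B \<longleftrightarrow> (\<forall>a\<in>A. \<exists>b\<in>B. absolutely_continuous b a)"

definition sconv :: "'a measure \<Rightarrow> 'a measure set \<Rightarrow> 'a measure set" where
  "sconv M0 Q = {R. space R = space M0 \<and> sets R = sets M0 \<and>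
     (\<exists>c :: nat \<Rightarrow> real. \<exists>q :: nat \<Rightarrow> 'a measure.
        (\<forall>n. q n \<in> Q) \<and> (\<forall>n. 0 \<le> c n) \<and> c sums 1 \<and>
        (\<forall>A\<in>sets M0. emeasure R A = (\<Sum>n. ennreal (c n) * emeasure (q n) A)))}"

definition localization ::
  "'a measure \<Rightarrow> 'a measure set \<Rightarrow> 'a measure set \<Rightarrow> ('a measure \<Rightarrow> 'a set) \<Rightarrow> bool" where
  "localization M0 P Q S \<longleftrightarrow>
     prob_family M0 Q \<and>
     (\<forall>q\<in>Q. S q \<in> sets M0) \<and>
     (\<forall>q\<in>Q. \<forall>r\<in>Q. emeasure q (S r) = (if q = r then 1 else 0)) \<and>
     lll Q P \<and> lll P (sconv M0 Q)"

definition pre_hahn_localizable :: "'a measure \<Rightarrow> 'a measure set \<Rightarrow> bool" where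
  "pre_hahn_localizable M0 P \<longleftrightarrow> prob_family M0 P \<and> (\<exists>Q S. localization M0 P Q S)"

definition hahn_localization ::
  "'a measure \<Rightarrow> 'a measure set \<Rightarrow> 'a measure set \<Rightarrow> ('a measure \<Rightarrow> 'a set) \<Rightarrow> bool" where
  "hahn_localization M0 P Q S \<longleftrightarrow>
     localization M0 P Q S \<and>
     (\<forall>E :: 'a measure \<Rightarrow> 'a set.
        (\<forall>q\<in>Q. E q \<in> sets M0 \<and> E q \<subseteq> S q) \<longrightarrow>
        (\<exists>T\<in>sets M0. (\<forall>q\<in>Q. emeasure q (E q - T) = 0) \<and>
           (\<forall>F\<in>sets M0. (\<forall>q\<in>Q. emeasure q (E q - F) = 0) \<longrightarrow>
              (\<forall>q\<in>Q. emeasure q (T - F) = 0))))"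

definition hahn_localizable :: "'a measure \<Rightarrow> 'a measure set \<Rightarrow> bool" where
  "hahn_localizable M0 P \<longleftrightarrow> prob_family M0 P \<and> (\<exists>Q S. hahn_localization M0 P Q S)"

end

theory Submission imports Defs begin

lemma completion_sandwich:
  assumes "A \<in> sets (completion p)"
  obtains L U where "L \<in> sets p" "U \<in> sets p" "L \<subseteq> A" "A \<subseteq> U" "U - L \<in> null_sets p"
proof -
  obtain S N N' where "A = S \<union> N" "N \<subseteq> N'" "N' \<in> null_sets p" "S \<in> sets p"
    using sets_completionE[OF assms] by metis
  moreover have "S \<union> N' - S \<in> null_sets p"
    by (rule null_sets_subset[of N']) (use \<open>N' \<in> null_sets p\<close> \<open>S \<in> sets p\<close> in auto)
  ultimately show ?thesis
    by (intro that[of S "S \<union> N'"]) auto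
qed

lemma completion_sandwichI:
  assumes "L \<in> sets p" "L \<subseteq> A" "A \<subseteq> U" "U - L \<in> null_sets p"
  shows "A \<in> sets (completion p)"
  using assms by (intro sets_completionI[of A L "A - L" "U - L"]) auto

lemma completion_sandwich_emeasure:
  assumes "L \<in> sets p" "U \<in> sets p" "L \<subseteq> A" "A \<subseteq> U" "U - L \<in> null_sets p"
  shows "emeasure (completion p) A = emeasure p L"
proof -
  have A: "A \<in> sets (completion p)" using assms completion_sandwichI by blast
  have "emeasure (completion p) L \<le> emeasure (completion p) A"
    using assms A by (intro emeasure_mono) auto
  moreover have "emeasure (completion p) A \<le> emeasure (completion p) U"
    using assms A by (intro emeasure_mono) auto
  moreover have "emeasure p U = emeasure p L"
  proof -
    have "U = L \<union> (U - L)" using assms by auto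
    then have "emeasure p U = emeasure p (L \<union> (U - L))" by simp
    also have "\<dots> = emeasure p L" using assms by (intro emeasure_Un_null_set) auto
    finally show ?thesis .
  qed
  ultimately show ?thesis using assms by (auto intro: antisym)
qed

lemma compl_sets_sigma:
  assumes "\<forall>r\<in>R. space r = space M0"
  shows "sigma_algebra (space M0) (compl_sets M0 R)"
  unfolding sigma_algebra_iff2
proof (intro conjI ballI allI impI)
  show "compl_sets M0 R \<subseteq> Pow (space M0)" by (auto simp: compl_sets_def)
  show "{} \<in> compl_sets M0 R" by (auto simp: compl_sets_def)
  fix s assume "s \<in> compl_sets M0 R"
  then show "space M0 - s \<in> compl_sets M0 R"
    using assms sets.compl_sets[of s "completion _"] by (auto simp: compl_sets_def) metis
next
  fix A :: "nat \<Rightarrow> _" assume "range A \<subseteq> compl_sets M0 R"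
  then show "(\<Union>i. A i) \<in> compl_sets M0 R"
    by (auto simp: compl_sets_def intro!: sets.countable_UN'' )
qed

lemma compl_space_sets:
  assumes "\<forall>r\<in>R. space r = space M0"
  shows "sets (compl_space M0 R) = compl_sets M0 R" "space (compl_space M0 R) = space M0"
  using sigma_algebra.sets_measure_of_eq[OF compl_sets_sigma[OF assms]]
    sigma_algebra.space_measure_of_eq[OF compl_sets_sigma[OF assms]]
  by (auto simp: compl_space_def)

lemma ext_measure_props:
  assumes "\<forall>r\<in>R. space r = space M0" "space p = space M0" "compl_sets M0 R \<subseteq> sets (completion p)"
  shows "sets (ext_measure M0 R p) = compl_sets M0 R" "space (ext_measure M0 R p) = space M0"
    "\<And>A. A \<in> compl_sets M0 R \<Longrightarrow> emeasure (ext_measure M0 R p) A = emeasure (completion p) A"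
proof -
  note sa = compl_sets_sigma[OF assms(1)]
  show "sets (ext_measure M0 R p) = compl_sets M0 R" "space (ext_measure M0 R p) = space M0"
    using sigma_algebra.sets_measure_of_eq[OF sa] sigma_algebra.space_measure_of_eq[OF sa]
    by (auto simp: ext_measure_def)
  fix A assume A: "A \<in> compl_sets M0 R"
  show "emeasure (ext_measure M0 R p) A = emeasure (completion p) A"
    unfolding ext_measure_def
  proof (rule emeasure_measure_of_sigma[OF sa _ _ A])
    show "positive (compl_sets M0 R) (emeasure (completion p))"
      by (simp add: positive_def)
    show "countably_additive (compl_sets M0 R) (emeasure (completion p))"
      using assms(3) by (auto simp: countably_additive_def intro!: suminf_emeasure)
  qed
qed

lemma sets_sub_compl_sets:
  assumes "\<forall>r\<in>R. space r = space M0 \<and> sets r = sets M0"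
  shows "sets M0 \<subseteq> compl_sets M0 R"
  unfolding compl_sets_def using assms sets.sets_into_space[of _ M0] by blast

lemma ext_measure_prob:
  assumes "\<forall>r\<in>R. space r = space M0" "space p = space M0" "compl_sets M0 R \<subseteq> sets (completion p)"
    "prob_space p"
  shows "prob_space (ext_measure M0 R p)"
proof
  have "space M0 \<in> compl_sets M0 R"
    using assms(1) by (auto simp: compl_sets_def) (metis sets.top space_completion)
  then show "emeasure (ext_measure M0 R p) (space (ext_measure M0 R p)) = 1"
    using ext_measure_props[OF assms(1-3)] assms(2,4) sets.top[of p]
    by (simp add: prob_space.emeasure_space_1 del: space_completion) (metis assms(2,4) prob_space.emeasure_space_1)
qed

lemma ext_measure_inj:
  assumes "\<forall>r\<in>R. space r = space M0 \<and> sets r = sets M0"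
    "\<forall>p\<in>X. space p = space M0 \<and> sets p = sets M0 \<and> compl_sets M0 R \<subseteq> sets (completion p)"
  shows "inj_on (ext_measure M0 R) X"
proof (rule inj_onI)
  fix p q assume pq: "p \<in> X" "q \<in> X" "ext_measure M0 R p = ext_measure M0 R q"
  have R: "\<forall>r\<in>R. space r = space M0" using assms(1) by auto
  show "p = q"
  proof (rule measure_eqI)
    show "sets p = sets q" using assms pq by auto
    fix A assume "A \<in> sets p"
    then have A: "A \<in> sets M0" "A \<in> compl_sets M0 R" using assms pq sets_sub_compl_sets[OF assms(1)] by auto
    have "emeasure p A = emeasure (completion p) A" using A assms pq by simp
    also have "\<dots> = emeasure (ext_measure M0 R p) A"
      by (rule ext_measure_props(3)[OF R _ _ A(2), symmetric]) (use assms pq in auto)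
    also have "\<dots> = emeasure (ext_measure M0 R q) A" by (simp only: pq(3))
    also have "\<dots> = emeasure (completion q) A"
      by (rule ext_measure_props(3)[OF R _ _ A(2)]) (use assms pq in auto)
    also have "\<dots> = emeasure q A" using A assms pq by simp
    finally show "emeasure p A = emeasure q A" .
  qed
qed

lemma ac_completion:
  assumes "absolutely_continuous b a" "sets a = sets b"
  shows "null_sets (completion b) \<subseteq> null_sets (completion a)"
proof
  fix x assume "x \<in> null_sets (completion b)"
  then obtain N' where "N' \<in> null_sets b" "x \<subseteq> N'" unfolding null_sets_completion_iff2 by blast
  then have "N' \<in> null_sets a" using assms(1) unfolding absolutely_continuous_def by blast
  then show "x \<in> null_sets (completion a)" using \<open>x \<subseteq> N'\<close> unfolding null_sets_completion_iff2 by blast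
qed

lemma ac_completion_sets:
  assumes "absolutely_continuous b a" "sets a = sets b" "A \<in> sets (completion b)"
  shows "A \<in> sets (completion a)"
proof -
  obtain L U where "L \<in> sets b" "U \<in> sets b" "L \<subseteq> A" "A \<subseteq> U" "U - L \<in> null_sets b"
    using completion_sandwich[OF assms(3)] by metis
  then show ?thesis using assms
    by (intro completion_sandwichI[of L a A U]) (auto simp: absolutely_continuous_def)
qed

lemma ext_measure_ac:
  assumes "\<forall>r\<in>R. space r = space M0" "space a = space M0" "compl_sets M0 R \<subseteq> sets (completion a)"
    "space b = space M0" "compl_sets M0 R \<subseteq> sets (completion b)"
    "absolutely_continuous b a" "sets a = sets b"
  shows "absolutely_continuous (ext_measure M0 R b) (ext_measure M0 R a)"
  unfolding absolutely_continuous_def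
proof
  fix A assume "A \<in> null_sets (ext_measure M0 R b)"
  then have A: "A \<in> compl_sets M0 R" "emeasure (ext_measure M0 R b) A = 0"
    using ext_measure_props[OF assms(1,4,5)] by auto
  then have "A \<in> null_sets (completion b)" using ext_measure_props[OF assms(1,4,5)] assms(5) by auto
  then have "A \<in> null_sets (completion a)" using ac_completion[OF assms(6,7)] by auto
  then have "emeasure (ext_measure M0 R a) A = 0"
    using ext_measure_props(3)[OF assms(1,2,3) A(1)] null_setsD1 by metis
  then show "A \<in> null_sets (ext_measure M0 R a)"
    using A(1) ext_measure_props(1)[OF assms(1,2,3)] by (intro null_setsI) auto
qed

lemma sconv_completion:
  assumes R: "sets R = sets M0" and qQ: "\<forall>n. q n \<in> Q"
    and Rm: "\<forall>A\<in>sets M0. emeasure R A = (\<Sum>n. ennreal (c n) * emeasure (q n) A)"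
    and Qp: "\<forall>q\<in>Q. sets q = sets M0"
    and AQ: "\<forall>q\<in>Q. A \<in> sets (completion q)"
  shows "A \<in> sets (completion R) \<and>
    emeasure (completion R) A = (\<Sum>n. ennreal (c n) * emeasure (completion (q n)) A)"
proof -
  have "\<forall>n. \<exists>L U. L \<in> sets M0 \<and> U \<in> sets M0 \<and> L \<subseteq> A \<and> A \<subseteq> U \<and> U - L \<in> null_sets (q n)"
  proof
    fix n
    have "A \<in> sets (completion (q n))" using AQ qQ by auto
    from completion_sandwich[OF this] show "\<exists>L U. L \<in> sets M0 \<and> U \<in> sets M0 \<and> L \<subseteq> A \<and> A \<subseteq> U \<and> U - L \<in> null_sets (q n)"
      using Qp qQ by metis
  qed
  then obtain L U where LU: "\<And>n. L n \<in> sets M0" "\<And>n. U n \<in> sets M0" "\<And>n. L n \<subseteq> A" "\<And>n. A \<subseteq> U n"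
    "\<And>n. U n - L n \<in> null_sets (q n)"
    by metis
  define LL where "LL = (\<Union>n. L n)"
  define UU where "UU = (\<Inter>n. U n)"
  have LL: "LL \<in> sets M0" unfolding LL_def using LU by auto
  have UU: "UU \<in> sets M0" unfolding UU_def using LU by (intro sets.countable_INT) auto
  have sub: "LL \<subseteq> A" "A \<subseteq> UU" using LU(3,4) unfolding LL_def UU_def by blast+
  have D: "UU - LL \<in> sets M0" using LL UU by auto
  have Dq: "UU - LL \<in> null_sets (q n)" for n
  proof (rule null_sets_subset[OF LU(5)])
    show "UU - LL \<in> sets (q n)" using D Qp qQ by auto
    show "UU - LL \<subseteq> U n - L n" unfolding LL_def UU_def by auto
  qed
  have "emeasure R (UU - LL) = (\<Sum>n. ennreal (c n) * emeasure (q n) (UU - LL))" using Rm D by auto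
  also have "\<dots> = 0" using Dq by (simp add: null_setsD1)
  finally have DR: "UU - LL \<in> null_sets R" using D R by (intro null_setsI) auto
  have "A \<in> sets (completion R)" using completion_sandwichI[of LL R A UU] LL sub DR R by auto
  moreover have "emeasure (completion R) A = emeasure R LL"
    using completion_sandwich_emeasure[of LL R UU A] LL UU sub DR R by auto
  moreover have "emeasure R LL = (\<Sum>n. ennreal (c n) * emeasure (q n) LL)" using Rm LL by auto
  moreover have "emeasure (q n) LL = emeasure (completion (q n)) A" for n
    using completion_sandwich_emeasure[of LL "q n" UU A] LL UU sub Dq[of n] Qp qQ by auto
  ultimately show ?thesis by simp
qed

lemma part1:
  assumes PF: "prob_family M0 P" and L: "localization M0 P Q S"
  shows "compl_sets M0 P = compl_sets M0 Q"
proof -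
  have Pp: "\<forall>p\<in>P. space p = space M0 \<and> sets p = sets M0" using PF by (auto simp: prob_family_def)
  have Qp: "\<forall>p\<in>Q. space p = space M0 \<and> sets p = sets M0" using L by (auto simp: prob_family_def localization_def)
  show ?thesis
  proof (intro equalityI subsetI)
    fix A assume A: "A \<in> compl_sets M0 P"
    show "A \<in> compl_sets M0 Q" unfolding compl_sets_def
    proof (intro CollectI conjI ballI)
      show "A \<subseteq> space M0" using A by (auto simp: compl_sets_def)
      fix q assume q: "q \<in> Q"
      then obtain p where p: "p \<in> P" "absolutely_continuous p q" using L by (auto simp: localization_def lll_def)
      show "A \<in> sets (completion q)"
        using ac_completion_sets[OF p(2)] A p q Pp Qp by (auto simp: compl_sets_def)
    qed
  next
    fix A assume A: "A \<in> compl_sets M0 Q"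
    show "A \<in> compl_sets M0 P" unfolding compl_sets_def
    proof (intro CollectI conjI ballI)
      show "A \<subseteq> space M0" using A by (auto simp: compl_sets_def)
      fix p assume p: "p \<in> P"
      then obtain R where R: "R \<in> sconv M0 Q" "absolutely_continuous R p" using L by (auto simp: localization_def lll_def)
      then obtain c q where cq: "sets R = sets M0" "\<forall>n. q n \<in> Q"
        "\<forall>A\<in>sets M0. emeasure R A = (\<Sum>n. ennreal (c n) * emeasure (q n) A)"
        unfolding sconv_def by blast
      have "A \<in> sets (completion R)"
        using sconv_completion[OF cq, of A] Qp A by (auto simp: compl_sets_def)
      then show "A \<in> sets (completion p)"
        using ac_completion_sets[OF R(2)] cq p Pp by auto
    qed
  qed
qed

lemma prob_family_ext:
  assumes PF: "prob_family M0 P" and X: "prob_family M0 X"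
    and XC: "\<forall>p\<in>X. compl_sets M0 P \<subseteq> sets (completion p)"
  shows "prob_family (compl_space M0 P) (ext_measure M0 P ` X)"
proof -
  have Ps: "\<forall>r\<in>P. space r = space M0" using PF by (auto simp: prob_family_def)
  show ?thesis unfolding prob_family_def
  proof
    fix m assume "m \<in> ext_measure M0 P ` X"
    then obtain p where p: "p \<in> X" "m = ext_measure M0 P p" by auto
    have pp: "space p = space M0" "prob_space p" "sets p = sets M0" using X p by (auto simp: prob_family_def)
    show "prob_space m \<and> space m = space (compl_space M0 P) \<and> sets m = sets (compl_space M0 P)"
      using ext_measure_prob[OF Ps pp(1) _ pp(2)] ext_measure_props[OF Ps pp(1)] compl_space_sets[OF Ps]
        XC p by auto
  qed
qed

lemma loc_ext:
  assumes PF: "prob_family M0 P" and L: "localization M0 P Q S"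
  shows "localization (compl_space M0 P) (ext_measure M0 P ` P) (ext_measure M0 P ` Q)
           (\<lambda>m. S (inv_into Q (ext_measure M0 P) m))"
proof -
  let ?e = "ext_measure M0 P"
  let ?C = "compl_sets M0 P"
  have Ps: "\<forall>r\<in>P. space r = space M0" and Pss: "\<forall>r\<in>P. space r = space M0 \<and> sets r = sets M0"
    using PF by (auto simp: prob_family_def)
  have QF: "prob_family M0 Q" using L by (auto simp: localization_def)
  have Qss: "\<forall>r\<in>Q. space r = space M0 \<and> sets r = sets M0" using QF by (auto simp: prob_family_def)
  have CP: "\<forall>p\<in>P. ?C \<subseteq> sets (completion p)" by (auto simp: compl_sets_def)
  have CQ: "\<forall>q\<in>Q. ?C \<subseteq> sets (completion q)" using part1[OF PF L] by (auto simp: compl_sets_def)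
  have CS: "sets (compl_space M0 P) = ?C" "space (compl_space M0 P) = space M0"
    using compl_space_sets[OF Ps] by auto
  have M0C: "sets M0 \<subseteq> ?C" using sets_sub_compl_sets[OF Pss] .
  have inj: "inj_on ?e Q" using ext_measure_inj[OF Pss, of Q] Qss CQ by auto
  have Sq: "S (inv_into Q ?e (?e q)) = S q" if "q \<in> Q" for q using inj that by simp
  have eS: "emeasure (?e q) (S r) = emeasure q (S r)" if "q \<in> Q" "r \<in> Q" for q r
  proof -
    have "S r \<in> sets M0" using L that by (auto simp: localization_def)
    then show ?thesis using ext_measure_props(3)[OF Ps _ _ , of q "S r"] M0C CQ Qss that by auto
  qed
  show ?thesis unfolding localization_def
  proof (intro conjI ballI)
    show "prob_family (compl_space M0 P) (?e ` Q)" using prob_family_ext[OF PF QF] CQ by auto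
  next
    fix m assume "m \<in> ?e ` Q"
    then obtain q where "q \<in> Q" "m = ?e q" by auto
    then show "S (inv_into Q ?e m) \<in> sets (compl_space M0 P)"
      using Sq L M0C CS by (auto simp: localization_def)
  next
    fix m m' assume "m \<in> ?e ` Q" "m' \<in> ?e ` Q"
    then obtain q r where qr: "q \<in> Q" "m = ?e q" "r \<in> Q" "m' = ?e r" by auto
    have "(m = m') = (q = r)" using inj qr by (auto dest: inj_onD)
    then show "emeasure m (S (inv_into Q ?e m')) = (if m = m' then 1 else 0)"
      using qr Sq eS L by (auto simp: localization_def)
  next
    show "lll (?e ` Q) (?e ` P)" unfolding lll_def
    proof
      fix m assume "m \<in> ?e ` Q"
      then obtain q where q: "q \<in> Q" "m = ?e q" by auto
      then obtain p where p: "p \<in> P" "absolutely_continuous p q" using L by (auto simp: localization_def lll_def)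
      have "absolutely_continuous (?e p) (?e q)"
        by (rule ext_measure_ac[OF Ps]) (use p q Qss Pss CQ CP in auto)
      then show "\<exists>b\<in>?e ` P. absolutely_continuous b m" using p q by auto
    qed
  next
    show "lll (?e ` P) (sconv (compl_space M0 P) (?e ` Q))" unfolding lll_def
    proof
      fix m assume "m \<in> ?e ` P"
      then obtain p where p: "p \<in> P" "m = ?e p" by auto
      then obtain R where R: "R \<in> sconv M0 Q" "absolutely_continuous R p" using L by (auto simp: localization_def lll_def)
      then obtain c q where cq: "space R = space M0" "sets R = sets M0" "\<forall>n. q n \<in> Q" "\<forall>n. 0 \<le> c n" "c sums 1"
        "\<forall>A\<in>sets M0. emeasure R A = (\<Sum>n. ennreal (c n) * emeasure (q n) A)"
        unfolding sconv_def by blast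
      have sc: "A \<in> sets (completion R) \<and>
          emeasure (completion R) A = (\<Sum>n. ennreal (c n) * emeasure (completion (q n)) A)" if "A \<in> ?C" for A
      proof -
        have "\<forall>q\<in>Q. A \<in> sets (completion q)" using CQ that by blast
        moreover have "\<forall>q\<in>Q. sets q = sets M0" using Qss by blast
        ultimately show ?thesis using sconv_completion[OF cq(2,3,6)] by blast
      qed
      have CR: "?C \<subseteq> sets (completion R)" using sc by auto
      have "?e R \<in> sconv (compl_space M0 P) (?e ` Q)"
        unfolding sconv_def
      proof (intro CollectI conjI exI)
        show "space (?e R) = space (compl_space M0 P)" "sets (?e R) = sets (compl_space M0 P)"
          using ext_measure_props[OF Ps cq(1) CR] CS by auto
        show "\<forall>n. (?e \<circ> q) n \<in> ?e ` Q" using cq by auto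
        show "\<forall>n. 0 \<le> c n" "c sums 1" using cq by auto
        show "\<forall>A\<in>sets (compl_space M0 P). emeasure (?e R) A = (\<Sum>n. ennreal (c n) * emeasure ((?e \<circ> q) n) A)"
        proof
          fix A assume "A \<in> sets (compl_space M0 P)"
          then have A: "A \<in> ?C" using CS by auto
          have "emeasure (?e q') A = emeasure (completion q') A" if "q' \<in> Q" for q'
            using ext_measure_props(3)[OF Ps _ _ A, of q'] Qss CQ that by auto
          then show "emeasure (?e R) A = (\<Sum>n. ennreal (c n) * emeasure ((?e \<circ> q) n) A)"
            using ext_measure_props(3)[OF Ps cq(1) CR A] sc[OF A] cq(3) by simp
        qed
      qed
      moreover have "absolutely_continuous (?e R) (?e p)"
        by (rule ext_measure_ac[OF Ps]) (use p R cq Pss CP CR in auto)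
      ultimately show "\<exists>b\<in>sconv (compl_space M0 P) (?e ` Q). absolutely_continuous b m" using p by auto
    qed
  qed
qed

lemma null_comp:
  assumes "X \<subseteq> N" "N \<in> null_sets q"
  shows "X \<in> null_sets (completion q)"
  using assms unfolding null_sets_completion_iff2 by blast

lemma hahn_ext:
  assumes PF: "prob_family M0 P" and H: "hahn_localization M0 P Q S" and D: "disjoint_family_on S Q"
  shows "hahn_localization (compl_space M0 P) (ext_measure M0 P ` P) (ext_measure M0 P ` Q)
           (\<lambda>m. S (inv_into Q (ext_measure M0 P) m))"
proof -
  let ?e = "ext_measure M0 P"
  let ?C = "compl_sets M0 P"
  have L: "localization M0 P Q S" using H by (auto simp: hahn_localization_def)
  have Ps: "\<forall>r\<in>P. space r = space M0" and Pss: "\<forall>r\<in>P. space r = space M0 \<and> sets r = sets M0"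
    using PF by (auto simp: prob_family_def)
  have QF: "prob_family M0 Q" using L by (auto simp: localization_def)
  have Qss: "\<forall>r\<in>Q. space r = space M0 \<and> sets r = sets M0 \<and> prob_space r" using QF by (auto simp: prob_family_def)
  have CQ: "\<forall>q\<in>Q. ?C \<subseteq> sets (completion q)" using part1[OF PF L] by (auto simp: compl_sets_def)
  have CS: "sets (compl_space M0 P) = ?C" "space (compl_space M0 P) = space M0"
    using compl_space_sets[OF Ps] by auto
  have sa: "sigma_algebra (space M0) ?C" using compl_sets_sigma[OF Ps] .
  have M0C: "sets M0 \<subseteq> ?C" using sets_sub_compl_sets[OF Pss] .
  have inj: "inj_on ?e Q" using ext_measure_inj[OF Pss, of Q] Qss CQ by auto
  have Sq: "S (inv_into Q ?e (?e q)) = S q" if "q \<in> Q" for q using inj that by simp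
  have Cdiff: "A - B \<in> ?C" if "A \<in> ?C" "B \<in> ?C" for A B
    using sets.Diff[of A "compl_space M0 P" B] CS that by simp
  have SQ: "S q \<in> sets M0" "emeasure q (S q) = 1" if "q \<in> Q" for q using L that by (auto simp: localization_def)
  have eC: "emeasure (?e q) A = emeasure (completion q) A" if "q \<in> Q" "A \<in> ?C" for q A
    using ext_measure_props(3)[OF Ps _ _ that(2), of q] Qss CQ that by auto
  have Scompl: "space M0 - S q \<in> null_sets q" if q: "q \<in> Q" for q
  proof -
    have "emeasure q (space q - S q) = emeasure q (space q) - emeasure q (S q)"
      using SQ[OF q] Qss q by (intro emeasure_compl) auto
    also have "\<dots> = 0" using SQ[OF q] Qss q prob_space.emeasure_space_1[of q] by simp
    finally show ?thesis using Qss q SQ[OF q] by (intro null_setsI) auto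
  qed
  have HH: "\<forall>E :: 'a measure \<Rightarrow> 'a set.
        (\<forall>q\<in>Q. E q \<in> sets M0 \<and> E q \<subseteq> S q) \<longrightarrow>
        (\<exists>T\<in>sets M0. (\<forall>q\<in>Q. emeasure q (E q - T) = 0) \<and>
           (\<forall>F\<in>sets M0. (\<forall>q\<in>Q. emeasure q (E q - F) = 0) \<longrightarrow>
              (\<forall>q\<in>Q. emeasure q (T - F) = 0)))" using H by (simp add: hahn_localization_def)
  show ?thesis unfolding hahn_localization_def
  proof (intro conjI allI impI)
    show "localization (compl_space M0 P) (?e ` P) (?e ` Q) (\<lambda>m. S (inv_into Q ?e m))"
      using loc_ext[OF PF L] .
  next
    fix E :: "'a measure \<Rightarrow> 'a set"
    assume E: "\<forall>m\<in>?e ` Q. E m \<in> sets (compl_space M0 P) \<and> E m \<subseteq> S (inv_into Q ?e m)"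
    have EQ: "E (?e q) \<in> ?C" "E (?e q) \<subseteq> S q" if "q \<in> Q" for q
      using E that Sq CS by auto
    have "\<forall>q\<in>Q. \<exists>L U. L \<in> sets M0 \<and> U \<in> sets M0 \<and> L \<subseteq> E (?e q) \<and> E (?e q) \<subseteq> U \<and> U - L \<in> null_sets q"
    proof
      fix q assume q: "q \<in> Q"
      have "E (?e q) \<in> sets (completion q)" using EQ[OF q] CQ q by auto
      from completion_sandwich[OF this] show "\<exists>L U. L \<in> sets M0 \<and> U \<in> sets M0 \<and> L \<subseteq> E (?e q) \<and> E (?e q) \<subseteq> U \<and> U - L \<in> null_sets q"
        using Qss q by metis
    qed
    then obtain Lq Uq where LU: "\<And>q. q \<in> Q \<Longrightarrow> Lq q \<in> sets M0" "\<And>q. q \<in> Q \<Longrightarrow> Uq q \<in> sets M0"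
      "\<And>q. q \<in> Q \<Longrightarrow> Lq q \<subseteq> E (?e q)" "\<And>q. q \<in> Q \<Longrightarrow> E (?e q) \<subseteq> Uq q"
      "\<And>q. q \<in> Q \<Longrightarrow> Uq q - Lq q \<in> null_sets q"
      by metis
    define L' where "L' q = Lq q \<inter> S q" for q
    have L'M: "L' q \<in> sets M0" "L' q \<subseteq> S q" if "q \<in> Q" for q
      using LU(1)[OF that] SQ[OF that] unfolding L'_def by auto
    obtain T where T: "T \<in> sets M0" "\<forall>q\<in>Q. emeasure q (L' q - T) = 0"
      "\<forall>F\<in>sets M0. (\<forall>q\<in>Q. emeasure q (L' q - F) = 0) \<longrightarrow> (\<forall>q\<in>Q. emeasure q (T - F) = 0)"
      using HH[rule_format, of L'] L'M by blast
    have Tnull: "L' q - T \<in> null_sets q" if "q \<in> Q" for q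
      using T L'M[OF that] Qss that by (intro null_setsI) auto
    show "\<exists>T\<in>sets (compl_space M0 P). (\<forall>m\<in>?e ` Q. emeasure m (E m - T) = 0) \<and>
        (\<forall>F\<in>sets (compl_space M0 P). (\<forall>m\<in>?e ` Q. emeasure m (E m - F) = 0) \<longrightarrow>
           (\<forall>m\<in>?e ` Q. emeasure m (T - F) = 0))"
    proof (intro bexI conjI ballI impI)
      show "T \<in> sets (compl_space M0 P)" using T M0C CS by auto
    next
      fix m assume "m \<in> ?e ` Q"
      then obtain q where q: "q \<in> Q" "m = ?e q" by auto
      have "E (?e q) - T \<subseteq> (Uq q - Lq q) \<union> (L' q - T)"
        using LU(4)[OF q(1)] EQ(2)[OF q(1)] unfolding L'_def by auto
      moreover have "(Uq q - Lq q) \<union> (L' q - T) \<in> null_sets q" using LU(5)[OF q(1)] Tnull[OF q(1)] by (rule null_sets.Un)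
      ultimately have "E (?e q) - T \<in> null_sets (completion q)" by (rule null_comp)
      moreover have "E (?e q) - T \<in> ?C" using EQ(1)[OF q(1)] T(1) M0C Cdiff by blast
      ultimately show "emeasure m (E m - T) = 0" using eC[OF q(1)] q(2) null_setsD1 by metis
    next
      fix F m assume F: "F \<in> sets (compl_space M0 P)" and HF: "\<forall>m\<in>?e ` Q. emeasure m (E m - F) = 0"
        and "m \<in> ?e ` Q"
      then obtain q where q: "q \<in> Q" "m = ?e q" by auto
      have FC: "F \<in> ?C" using F CS by auto
      then have "F \<in> sets (completion q)" using CQ q by auto
      then obtain LF UF where LF: "LF \<in> sets q" "UF \<in> sets q" "LF \<subseteq> F" "F \<subseteq> UF" "UF - LF \<in> null_sets q"
        by (rule completion_sandwich)
      have LFM: "LF \<in> sets M0" using LF Qss q by auto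
      define F2 where "F2 = T - (S q - LF)"
      have F2: "F2 \<in> sets M0" unfolding F2_def using T(1) LFM SQ[OF q(1)] by auto
      have "\<forall>r\<in>Q. emeasure r (L' r - F2) = 0"
      proof
        fix r assume r: "r \<in> Q"
        have meas: "L' r - F2 \<in> sets r" using L'M[OF r] F2 Qss r by auto
        show "emeasure r (L' r - F2) = 0"
        proof (cases "r = q")
          case False
          then have "S r \<inter> S q = {}" using D r q unfolding disjoint_family_on_def by blast
          then have "L' r - F2 \<subseteq> L' r - T" unfolding F2_def L'_def by blast
          then have "L' r - F2 \<in> null_sets r" by (rule null_sets_subset[OF Tnull[OF r] meas])
          then show ?thesis by (rule null_setsD1)
        next
          case True
          have EF: "E (?e q) - F \<in> null_sets (completion q)"
          proof -
            have "E (?e q) - F \<in> ?C" using EQ(1)[OF q(1)] FC Cdiff by blast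
            moreover have "emeasure (?e q) (E (?e q) - F) = 0" using HF q(1) by blast
            ultimately have "emeasure (completion q) (E (?e q) - F) = 0" using eC[OF q(1)] by simp
            moreover have "E (?e q) - F \<in> sets (completion q)" using CQ q(1) \<open>E (?e q) - F \<in> ?C\<close> by blast
            ultimately show ?thesis by (intro null_setsI)
          qed
          have "Lq q - LF \<subseteq> (E (?e q) - F) \<union> (UF - LF)" using LU(3)[OF q(1)] LF by auto
          moreover have "(E (?e q) - F) \<union> (UF - LF) \<in> null_sets (completion q)"
            using EF null_sets_completionI[OF LF(5)] by (rule null_sets.Un)
          ultimately have "Lq q - LF \<in> null_sets (completion q)" by (rule null_sets_completion_subset)
          moreover have "Lq q - LF \<in> sets q" using LU(1)[OF q(1)] LF Qss q by auto
          ultimately have n1: "Lq q - LF \<in> null_sets q" using null_sets_completion_iff by blast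
          have s1: "L' q - F2 \<subseteq> (L' q - T) \<union> (Lq q - LF)" unfolding F2_def L'_def by blast
          have s2: "(L' q - T) \<union> (Lq q - LF) \<in> null_sets q" using n1 Tnull[OF q(1)] by (rule null_sets.Un[rotated])
          have s3: "L' q - F2 \<in> sets q" using meas True by simp
          have "L' q - F2 \<in> null_sets q" by (rule null_sets_subset[OF s2 s3 s1])
          then show ?thesis using True by (simp add: null_setsD1)
        qed
      qed
      then have "emeasure q (T - F2) = 0" using T(3)[rule_format, OF F2] q(1) by blast
      moreover have "T - F2 \<in> sets q" using T(1) F2 Qss q(1) by auto
      ultimately have n2: "T - F2 \<in> null_sets q" by (intro null_setsI)
      have "T - F \<subseteq> (space M0 - S q) \<union> (T - F2)"
        using LF(3) sets.sets_into_space[OF T(1)] unfolding F2_def by blast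
      moreover have "(space M0 - S q) \<union> (T - F2) \<in> null_sets q" using Scompl[OF q(1)] n2 by (rule null_sets.Un)
      ultimately have "T - F \<in> null_sets (completion q)" by (rule null_comp)
      moreover have "T - F \<in> ?C" using FC T(1) M0C Cdiff by blast
      ultimately show "emeasure m (T - F) = 0" using eC[OF q(1)] q(2) null_setsD1 by metis
    qed
  qed
qed

theorem lemma3p6:
  fixes M0 :: "'a measure" and P Q :: "'a measure set" and S :: "'a measure \<Rightarrow> 'a set"
  assumes "prob_family M0 P"
    and "localization M0 P Q S"
  shows "compl_sets M0 P = compl_sets M0 Q \<and>
         pre_hahn_localizable (compl_space M0 P) (ext_measure M0 P ` P) \<and>
         ((\<exists>Q' S'. hahn_localization M0 P Q' S' \<and> disjoint_family_on S' Q') \<longrightarrow>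
           hahn_localizable (compl_space M0 P) (ext_measure M0 P ` P))"
proof (intro conjI impI)
  show "compl_sets M0 P = compl_sets M0 Q" using part1[OF assms] .
  have pf: "prob_family (compl_space M0 P) (ext_measure M0 P ` P)"
    using prob_family_ext[OF assms(1) assms(1)] by (auto simp: compl_sets_def)
  show "pre_hahn_localizable (compl_space M0 P) (ext_measure M0 P ` P)"
    unfolding pre_hahn_localizable_def using pf loc_ext[OF assms] by blast
  assume "\<exists>Q' S'. hahn_localization M0 P Q' S' \<and> disjoint_family_on S' Q'"
  then obtain Q' S' where "hahn_localization M0 P Q' S'" "disjoint_family_on S' Q'" by blast
  then show "hahn_localizable (compl_space M0 P) (ext_measure M0 P ` P)"
    unfolding hahn_localizable_def using pf hahn_ext[OF assms(1)] by blast
qed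

end
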